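(* Let $w_0\in\mathcal C^2(\mathbb R)$ with $w_0'$ bounded, and assume the limits $w_0'(\pm\infty):=\lim_{x\to\pm\infty}w_0'(x)$ exist and are finite. Let $w$ be a classical solution of problem (P) on $[0,t_* )\times\mathbb R$ (with $(r,\ell)$ of class $\mathcal C^1$). Then for every $t\in[0,t_* )$, $$\lim_{x\to\pm\infty}w_{,x}(t,x)=w_0'(\pm\infty),\qquad \lim_{x\to\pm\infty}w_{,t}(t,x)=0 .$$
   Context: Let $Q(\xi):=\sqrt{1+\xi^2}$ and $L(u):=\int_0^uQ(\xi)\,d\xi=\tfrac12\big(u\sqrt{1+u^2}+\operatorname{arcsinh}u\big)$, a strictly increasing odd bijection of $\mathbb R$. Problem (P) is the Cauchy problem $w_{,tt}-Q^2(w_{,x})\,w_{,xx}=0$ on $[0,\infty)\times\mathbb R$, $w(0,x)=w_0(x)$, $w_{,t}(0,x)=0$, where subscripts after a comma denote partial derivatives. The Riemann invariants are $r:=w_{,t}-L(w_{,x})$, $\ell:=w_{,t}+L(w_{,x})$; with $\eta:=r-\ell$ one has $w_{,x}=L^{-1}(-\eta/2)$, and one sets $k(\eta):=Q(L^{-1}(-\eta/2))$. Then $(r,\ell)$ solves $r_{,t}+k(r-\ell)r_{,x}=0$, $\ell_{,t}-k(r-\ell)\ell_{,x}=0$, with $r(0,x)=r_0(x):=-L(w_0'(x))$, $\ell(0,x)=\ell_0(x):=L(w_0'(x))=-r_0(x)$. $[0,t_* )$ denotes the maximal interval of existence of the $\mathcal C^1$ solution $(r,\ell)$. *)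

theory Defs
  imports "HOL-Analysis.Analysis"
begin

definition Q :: "real \<Rightarrow> real" where
  "Q \<xi> = sqrt (1 + \<xi>\<^sup>2)"

definition L :: "real \<Rightarrow> real" where
  "L u = (u * sqrt (1 + u\<^sup>2) + arsinh u) / 2"

text \<open>Classical (C^2) solution of problem (P) on [0,T) x R.
  wt and wx are the partial derivatives w_t and w_x of w; all second-order
  partial derivatives exist and are continuous on [0,T) x R (time derivatives
  at t = 0 are one-sided), so in particular r = wt - L wx and l = wt + L wx are C^1.\<close>
definition classical_solution_P ::
  "(real \<Rightarrow> real) \<Rightarrow> real \<Rightarrow> (real \<Rightarrow> real \<Rightarrow> real)
     \<Rightarrow> (real \<Rightarrow> real \<Rightarrow> real) \<Rightarrow> (real \<Rightarrow> real \<Rightarrow> real) \<Rightarrow> bool" where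
  "classical_solution_P w0 T w wt wx \<longleftrightarrow>
     (\<forall>t\<in>{0..<T}. \<forall>x.
        ((\<lambda>s. w s x) has_real_derivative wt t x) (at t within {0..<T}) \<and>
        ((\<lambda>y. w t y) has_real_derivative wx t x) (at x)) \<and>
     (\<exists>wtt wtx wxt wxx.
        (\<forall>t\<in>{0..<T}. \<forall>x.
           ((\<lambda>s. wt s x) has_real_derivative wtt t x) (at t within {0..<T}) \<and>
           ((\<lambda>y. wt t y) has_real_derivative wtx t x) (at x) \<and>
           ((\<lambda>s. wx s x) has_real_derivative wxt t x) (at t within {0..<T}) \<and>
           ((\<lambda>y. wx t y) has_real_derivative wxx t x) (at x) \<and>
           wtt t x - (Q (wx t x))\<^sup>2 * wxx t x = 0) \<and>
        continuous_on ({0..<T} \<times> UNIV) (\<lambda>(t, x). wt t x) \<and>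
        continuous_on ({0..<T} \<times> UNIV) (\<lambda>(t, x). wx t x) \<and>
        continuous_on ({0..<T} \<times> UNIV) (\<lambda>(t, x). wtt t x) \<and>
        continuous_on ({0..<T} \<times> UNIV) (\<lambda>(t, x). wtx t x) \<and>
        continuous_on ({0..<T} \<times> UNIV) (\<lambda>(t, x). wxt t x) \<and>
        continuous_on ({0..<T} \<times> UNIV) (\<lambda>(t, x). wxx t x)) \<and>
     (\<forall>x. w 0 x = w0 x) \<and>
     (\<forall>x. wt 0 x = 0)"

end

theory Submission imports Defs begin

lemma L_deriv: "(L has_real_derivative Q u) (at u)"
proof -
  have p: "0 < 1 + u\<^sup>2" by (metis add_pos_nonneg zero_less_one zero_le_power2)
  have s: "sqrt (1 + u\<^sup>2) > 0" using p by simp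
  have a: "DERIV sqrt (1 + u\<^sup>2) :> inverse (sqrt (1 + u\<^sup>2)) / 2"
    by (rule DERIV_real_sqrt) (rule p)
  have b: "((\<lambda>u. 1 + u\<^sup>2) has_real_derivative 2 * u) (at u)"
    by (auto intro!: derivative_eq_intros)
  have c: "((\<lambda>u. sqrt (1 + u\<^sup>2)) has_real_derivative inverse (sqrt (1 + u\<^sup>2)) / 2 * (2 * u)) (at u)"
    using DERIV_chain2[OF a b] .
  have d: "((\<lambda>u. u * sqrt (1 + u\<^sup>2)) has_real_derivative 1 * sqrt (1 + u\<^sup>2) + u * (inverse (sqrt (1 + u\<^sup>2)) / 2 * (2 * u))) (at u)"
    using DERIV_mult[OF DERIV_ident c] by (simp add: algebra_simps)
  have e: "(arsinh has_real_derivative 1 / sqrt (u ^ 2 + 1)) (at u)"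
    by (rule arsinh_real_has_field_derivative)
  have f: "((\<lambda>u. (u * sqrt (1 + u\<^sup>2) + arsinh u) / 2) has_real_derivative
     (1 * sqrt (1 + u\<^sup>2) + u * (inverse (sqrt (1 + u\<^sup>2)) / 2 * (2 * u)) + 1 / sqrt (u ^ 2 + 1)) / 2) (at u)"
    using DERIV_cdivide[OF DERIV_add[OF d e], of 2] by simp
  have g: "(1 * sqrt (1 + u\<^sup>2) + u * (inverse (sqrt (1 + u\<^sup>2)) / 2 * (2 * u)) + 1 / sqrt (u ^ 2 + 1)) / 2 = sqrt (1 + u\<^sup>2)"
  proof -
    have "sqrt (1 + u\<^sup>2) * sqrt (1 + u\<^sup>2) = 1 + u\<^sup>2" using p by simp
    then show ?thesis using s by (simp add: field_simps add.commute power2_eq_square)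
  qed
  show ?thesis using f unfolding g L_def[abs_def] Q_def .
qed

lemma Q_ge1: "1 \<le> Q u"
  unfolding Q_def by (metis real_sqrt_sum_squares_ge1 one_power2)

lemma Q_le: "Q u \<le> 1 + \<bar>u\<bar>"
proof -
  have "1 + u\<^sup>2 \<le> (1 + \<bar>u\<bar>)\<^sup>2" by (simp add: power2_eq_square algebra_simps)
  then have "sqrt (1 + u\<^sup>2) \<le> sqrt ((1 + \<bar>u\<bar>)\<^sup>2)" using real_sqrt_le_mono by blast
  then show ?thesis unfolding Q_def by simp
qed

lemma L_lip_aux: "u < v \<Longrightarrow> v - u \<le> L v - L u"
proof -
  assume "u < v"
  from MVT2[OF this, of L Q] L_deriv obtain z where "L v - L u = (v - u) * Q z" by blast
  moreover have "1 \<le> Q z" by (rule Q_ge1)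
  ultimately show ?thesis using \<open>u < v\<close> by simp
qed

lemma L_lip: "\<bar>u - v\<bar> \<le> \<bar>L u - L v\<bar>"
  using L_lip_aux[of u v] L_lip_aux[of v u] by (cases u v rule: linorder_cases) auto

lemma L_0: "L 0 = 0" by (simp add: L_def)

lemma abs_le_L: "\<bar>u\<bar> \<le> \<bar>L u\<bar>"
  using L_lip[of u 0] by (simp add: L_0)

lemma isCont_L: "isCont L u"
  using L_deriv DERIV_isCont by blast

lemma abs_aux: fixes a b A B e :: real
  shows "\<bar>a - A\<bar> < e \<Longrightarrow> \<bar>b - B\<bar> < e \<Longrightarrow> a = b \<Longrightarrow> e = \<bar>A - B\<bar> / 2 \<Longrightarrow> False"
  by (auto simp: abs_if split: if_splits)

lemma L_tendsto_inv: assumes "((\<lambda>x. L (f x)) \<longlongrightarrow> L a) F" shows "(f \<longlongrightarrow> a) F"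
  unfolding tendsto_iff
proof (intro allI impI)
  fix e :: real assume "e > 0"
  then have "\<forall>\<^sub>F x in F. dist (L (f x)) (L a) < e" using tendsto_iff[THEN iffD1, OF assms, rule_format, of e] by simp
  then show "\<forall>\<^sub>F x in F. dist (f x) a < e"
    by (rule eventually_mono) (use L_lip in \<open>auto simp: dist_real_def intro: le_less_trans\<close>)
qed

lemma joint_deriv:
  fixes f ft fx :: "real \<Rightarrow> real \<Rightarrow> real"
  assumes d: "\<forall>s\<in>{0..<T}. \<forall>y. ((\<lambda>s. f s y) has_real_derivative ft s y) (at s within {0..<T}) \<and>
      ((\<lambda>y. f s y) has_real_derivative fx s y) (at y)"
    and c: "continuous_on ({0..<T} \<times> UNIV) (\<lambda>(s, y). fx s y)"
    and p: "p \<in> {0..<T} \<times> UNIV"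
  shows "((\<lambda>q. f (fst q) (snd q)) has_derivative
      (\<lambda>q. ft (fst p) (snd p) * fst q + fx (fst p) (snd p) * snd q)) (at p within {0..<T} \<times> UNIV)"
proof -
  obtain s y where py: "p = (s, y)" by (cases p)
  have s: "s \<in> {0..<T}" using p py by auto
  have fx: "((\<lambda>s. f s y) has_derivative (\<lambda>h. ft s y * h)) (at s within {0..<T})"
    using d s has_field_derivative_def by (metis (no_types) has_field_derivative_imp_has_derivative)
  have fy: "\<And>a b. a \<in> {0..<T} \<Longrightarrow> b \<in> UNIV \<Longrightarrow>
     ((\<lambda>y. f a y) has_derivative blinfun_apply (blinfun_mult_left (fx a b))) (at b within UNIV)"
  proof -
    fix a b assume "a \<in> {0..<T}"
    then have "((\<lambda>y. f a y) has_derivative (\<lambda>h. fx a b * h)) (at b)"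
      using d has_field_derivative_imp_has_derivative by blast
    then show "((\<lambda>y. f a y) has_derivative blinfun_apply (blinfun_mult_left (fx a b))) (at b within UNIV)"
      by (simp add: mult.commute)
  qed
  have cc: "continuous_on ({0..<T} \<times> UNIV) (\<lambda>q. blinfun_mult_left ((\<lambda>(s, y). fx s y) q))"
    by (rule bounded_linear.continuous_on[OF bounded_linear_blinfun_mult_left c])
  have "continuous (at (s, y) within {0..<T} \<times> UNIV) (\<lambda>(s, y). blinfun_mult_left (fx s y))"
  proof -
    have "continuous (at (s, y) within {0..<T} \<times> UNIV) (\<lambda>q. blinfun_mult_left ((\<lambda>(s, y). fx s y) q))"
      using cc[unfolded continuous_on_eq_continuous_within] s by auto
    then show ?thesis by (simp add: case_prod_beta')
  qed
  from has_derivative_partialsI[OF fx fy this]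
  have "((\<lambda>(x, y). f x y) has_derivative (\<lambda>(tx, ty). ft s y * tx + ty * fx s y)) (at (s, y) within {0..<T} \<times> UNIV)"
    by simp
  then show ?thesis using py
    by (simp add: case_prod_beta' mult.commute)
qed

lemma schwarz:
  fixes w wt wx wtx wxt :: "real \<Rightarrow> real \<Rightarrow> real"
  assumes d1: "\<forall>t\<in>{0..<T}. \<forall>x. ((\<lambda>s. w s x) has_real_derivative wt t x) (at t within {0..<T}) \<and>
        ((\<lambda>y. w t y) has_real_derivative wx t x) (at x)"
    and d2: "\<forall>t\<in>{0..<T}. \<forall>x. ((\<lambda>y. wt t y) has_real_derivative wtx t x) (at x) \<and>
        ((\<lambda>s. wx s x) has_real_derivative wxt t x) (at t within {0..<T})"
    and c1: "continuous_on ({0..<T} \<times> UNIV) (\<lambda>(t, x). wtx t x)"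
    and c2: "continuous_on ({0..<T} \<times> UNIV) (\<lambda>(t, x). wxt t x)"
    and t: "t \<in> {0..<T}"
  shows "wtx t x = wxt t x"
proof -
  have key: "\<exists>\<sigma>1 \<xi>1 \<sigma>2 \<xi>2. \<sigma>1 \<in> {t..t+h} \<and> \<xi>1 \<in> {x..x+h} \<and> \<sigma>2 \<in> {t..t+h} \<and> \<xi>2 \<in> {x..x+h}
      \<and> wtx \<sigma>1 \<xi>1 = wxt \<sigma>2 \<xi>2" if h: "0 < h" "t + h < T" for h
  proof -
    define \<Delta> where "\<Delta> = w (t+h) (x+h) - w (t+h) x - w t (x+h) + w t x"
    have sub: "{t..t+h} \<subseteq> {0..<T}" using t h by auto
    have "\<exists>\<sigma>\<in>{t..t+h}. (\<lambda>s. w s (x+h) - w s x) (t+h) - (\<lambda>s. w s (x+h) - w s x) t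
        = (\<lambda>s. (*) (wt s (x+h) - wt s x)) \<sigma> (t + h - t)"
    proof (rule mvt_very_simple)
      fix s assume "t \<le> s" "s \<le> t + h"
      then have "s \<in> {0..<T}" using sub by auto
      then have "((\<lambda>s. w s (x+h) - w s x) has_real_derivative (wt s (x+h) - wt s x)) (at s within {0..<T})"
        using d1 by (auto intro!: derivative_intros)
      then have "((\<lambda>s. w s (x+h) - w s x) has_real_derivative (wt s (x+h) - wt s x)) (at s within {t..t+h})"
        using has_field_derivative_subset sub by blast
      then show "((\<lambda>s. w s (x+h) - w s x) has_derivative (*) (wt s (x+h) - wt s x)) (at s within {t..t+h})"
        by (simp add: has_field_derivative_def)
    qed (use h in auto)
    then obtain \<sigma>1 where s1: "\<sigma>1 \<in> {t..t+h}" and e1: "\<Delta> = (wt \<sigma>1 (x+h) - wt \<sigma>1 x) * h"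
      unfolding \<Delta>_def by (auto simp: algebra_simps)
    have "\<exists>\<xi>\<in>{x..x+h}. wt \<sigma>1 (x+h) - wt \<sigma>1 x = (\<lambda>y. (*) (wtx \<sigma>1 y)) \<xi> (x + h - x)"
    proof (rule mvt_very_simple)
      fix y
      have "\<sigma>1 \<in> {0..<T}" using s1 sub by auto
      then show "((\<lambda>y. wt \<sigma>1 y) has_derivative (*) (wtx \<sigma>1 y)) (at y within {x..x+h})"
        using d2 has_field_derivative_def has_derivative_at_withinI by blast
    qed (use h in auto)
    then obtain \<xi>1 where x1: "\<xi>1 \<in> {x..x+h}" and e2: "wt \<sigma>1 (x+h) - wt \<sigma>1 x = wtx \<sigma>1 \<xi>1 * h"
      by (auto simp: algebra_simps)
    have "\<exists>\<xi>\<in>{x..x+h}. (\<lambda>y. w (t+h) y - w t y) (x+h) - (\<lambda>y. w (t+h) y - w t y) x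
        = (\<lambda>y. (*) (wx (t+h) y - wx t y)) \<xi> (x + h - x)"
    proof (rule mvt_very_simple)
      fix y
      have "t + h \<in> {0..<T}" "t \<in> {0..<T}" using t h by auto
      then have "((\<lambda>y. w (t+h) y - w t y) has_real_derivative (wx (t+h) y - wx t y)) (at y)"
        using d1 by (auto intro!: derivative_intros)
      then show "((\<lambda>y. w (t+h) y - w t y) has_derivative (*) (wx (t+h) y - wx t y)) (at y within {x..x+h})"
        using has_field_derivative_def has_derivative_at_withinI by blast
    qed (use h in auto)
    then obtain \<xi>2 where x2: "\<xi>2 \<in> {x..x+h}" and e3: "\<Delta> = (wx (t+h) \<xi>2 - wx t \<xi>2) * h"
      unfolding \<Delta>_def by (auto simp: algebra_simps)
    have "\<exists>\<sigma>\<in>{t..t+h}. wx (t+h) \<xi>2 - wx t \<xi>2 = (\<lambda>s. (*) (wxt s \<xi>2)) \<sigma> (t + h - t)"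
    proof (rule mvt_very_simple)
      fix s assume "t \<le> s" "s \<le> t + h"
      then have "s \<in> {0..<T}" using sub by auto
      then have "((\<lambda>s. wx s \<xi>2) has_real_derivative wxt s \<xi>2) (at s within {t..t+h})"
        using d2 has_field_derivative_subset sub by blast
      then show "((\<lambda>s. wx s \<xi>2) has_derivative (*) (wxt s \<xi>2)) (at s within {t..t+h})"
        by (simp add: has_field_derivative_def)
    qed (use h in auto)
    then obtain \<sigma>2 where s2: "\<sigma>2 \<in> {t..t+h}" and e4: "wx (t+h) \<xi>2 - wx t \<xi>2 = wxt \<sigma>2 \<xi>2 * h"
      by (auto simp: algebra_simps)
    have E1: "\<Delta> = wtx \<sigma>1 \<xi>1 * (h * h)" using e1 e2 by simp
    have E2: "\<Delta> = wxt \<sigma>2 \<xi>2 * (h * h)" using e3 e4 by simp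
    have hh: "h * h \<noteq> 0" using h by simp
    have "wtx \<sigma>1 \<xi>1 = wxt \<sigma>2 \<xi>2" using E1 E2 hh by (metis mult_cancel_right)
    then show ?thesis using s1 s2 x1 x2 by blast
  qed
  show ?thesis
  proof (rule ccontr)
    assume ne: "wtx t x \<noteq> wxt t x"
    define e where "e = \<bar>wtx t x - wxt t x\<bar> / 2"
    have e: "e > 0" using ne e_def by simp
    have tx: "(t, x) \<in> {0..<T} \<times> UNIV" using t by simp
    from c1 tx have "continuous (at (t, x) within {0..<T} \<times> UNIV) (\<lambda>(t, x). wtx t x)"
      using continuous_on_eq_continuous_within by blast
    then obtain d1 where d1: "d1 > 0" "\<And>q. q \<in> {0..<T} \<times> UNIV \<Longrightarrow> dist q (t, x) < d1 \<Longrightarrow>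
        dist ((\<lambda>(t, x). wtx t x) q) (wtx t x) < e"
      unfolding continuous_within_eps_delta using e by fastforce
    from c2 tx have "continuous (at (t, x) within {0..<T} \<times> UNIV) (\<lambda>(t, x). wxt t x)"
      using continuous_on_eq_continuous_within by blast
    then obtain d2 where d2: "d2 > 0" "\<And>q. q \<in> {0..<T} \<times> UNIV \<Longrightarrow> dist q (t, x) < d2 \<Longrightarrow>
        dist ((\<lambda>(t, x). wxt t x) q) (wxt t x) < e"
      unfolding continuous_within_eps_delta using e by fastforce
    define h where "h = min (min d1 d2 / 3) ((T - t) / 2)"
    have h: "0 < h" "t + h < T"
    proof -
      have "h \<le> (T - t) / 2" unfolding h_def by linarith
      then show "t + h < T" using t by simp
      show "0 < h" using d1(1) d2(1) t unfolding h_def by simp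
    qed
    from key[OF h] obtain \<sigma>1 \<xi>1 \<sigma>2 \<xi>2 where
      k: "\<sigma>1 \<in> {t..t+h}" "\<xi>1 \<in> {x..x+h}" "\<sigma>2 \<in> {t..t+h}" "\<xi>2 \<in> {x..x+h}"
         "wtx \<sigma>1 \<xi>1 = wxt \<sigma>2 \<xi>2" by blast
    have dd: "dist (a, b) (t, x) < min d1 d2" if "a \<in> {t..t+h}" "b \<in> {x..x+h}" for a b
    proof -
      have "dist (a, b) (t, x) \<le> dist a t + dist b x"
        unfolding dist_Pair_Pair by (metis sqrt_sum_squares_le_sum zero_le_dist)
      also have "\<dots> \<le> 2 * h" using that by (auto simp: dist_real_def)
      also have "\<dots> < min d1 d2" using h d1 d2 unfolding h_def by auto
      finally show ?thesis .
    qed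
    have m1: "(\<sigma>1, \<xi>1) \<in> {0..<T} \<times> UNIV" "(\<sigma>2, \<xi>2) \<in> {0..<T} \<times> UNIV"
      using k h t by auto
    have "\<bar>wtx \<sigma>1 \<xi>1 - wtx t x\<bar> < e" using d1(2)[OF m1(1)] dd[OF k(1,2)] by (simp add: dist_real_def)
    moreover have "\<bar>wxt \<sigma>2 \<xi>2 - wxt t x\<bar> < e" using d2(2)[OF m1(2)] dd[OF k(3,4)] by (simp add: dist_real_def)
    ultimately show False using k(5) e_def by (rule abs_aux)
  qed
qed

definition cone :: "real \<Rightarrow> real \<Rightarrow> real \<Rightarrow> real \<Rightarrow> (real \<times> real) set" where
  "cone K t0 x0 \<tau> = {p. 0 \<le> fst p \<and> fst p \<le> \<tau> \<and> \<bar>snd p - x0\<bar> \<le> K * (t0 - fst p)}"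

lemma cone_closed: "closed (cone K t0 x0 \<tau>)"
  unfolding cone_def
  by (intro closed_Collect_conj closed_Collect_le continuous_intros)

lemma cone_subset: assumes K: "0 \<le> K" shows "cone K t0 x0 \<tau> \<subseteq> {0..\<tau>} \<times> {x0 - K * t0 .. x0 + K * t0}"
proof
  fix p assume p: "p \<in> cone K t0 x0 \<tau>"
  then have a: "0 \<le> fst p" "fst p \<le> \<tau>" "\<bar>snd p - x0\<bar> \<le> K * (t0 - fst p)" by (auto simp: cone_def)
  moreover have "K * (t0 - fst p) \<le> K * t0" using K a(1) by (simp add: algebra_simps)
  ultimately have "\<bar>snd p - x0\<bar> \<le> K * t0" by linarith
  then show "p \<in> {0..\<tau>} \<times> {x0 - K * t0 .. x0 + K * t0}" using a
    by (cases p) (auto simp: abs_le_iff)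
qed

lemma cone_compact: assumes K: "0 \<le> K" shows "compact (cone K t0 x0 \<tau>)"
proof -
  have "cone K t0 x0 \<tau> = ({0..\<tau>} \<times> {x0 - K * t0 .. x0 + K * t0}) \<inter> cone K t0 x0 \<tau>"
    using cone_subset[OF K] by blast
  then show ?thesis by (metis compact_Int_closed compact_Times compact_Icc cone_closed)
qed

lemma maxp:
  fixes f ft fx c :: "real \<times> real \<Rightarrow> real"
  assumes D: "\<forall>p\<in>{0..<T} \<times> UNIV. (f has_derivative (\<lambda>q. ft p * fst q + fx p * snd q)) (at p within {0..<T} \<times> UNIV)"
    and eq: "\<forall>p\<in>{0..<T} \<times> UNIV. ft p + c p * fx p = 0"
    and \<tau>: "0 \<le> \<tau>" "\<tau> \<le> t0" "t0 < T" and K: "0 \<le> K"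
    and cb: "\<forall>p\<in>cone K t0 x0 \<tau>. \<bar>c p\<bar> \<le> K"
    and base: "\<forall>y. \<bar>y - x0\<bar> \<le> K * t0 \<longrightarrow> f (0, y) \<le> A"
  shows "\<forall>p\<in>cone K t0 x0 \<tau>. f p \<le> A"
proof (rule ccontr)
  let ?C = "cone K t0 x0 \<tau>"
  let ?D = "{0..<T} \<times> (UNIV :: real set)"
  assume "\<not> (\<forall>p\<in>?C. f p \<le> A)"
  then obtain p0 where p0: "p0 \<in> ?C" "f p0 > A" by force
  define \<epsilon> where "\<epsilon> = (f p0 - A) / (2 * (\<tau> + 1))"
  have \<epsilon>: "\<epsilon> > 0" using p0 \<tau> by (simp add: \<epsilon>_def)
  have \<epsilon>\<tau>: "\<epsilon> * \<tau> < f p0 - A"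
  proof -
    have "\<epsilon> * \<tau> = (f p0 - A) * (\<tau> / (2 * (\<tau> + 1)))" by (simp add: \<epsilon>_def)
    also have "\<tau> / (2 * (\<tau> + 1)) < 1" using \<tau> by (simp add: field_simps)
    then have "(f p0 - A) * (\<tau> / (2 * (\<tau> + 1))) < (f p0 - A) * 1"
      using p0 by (intro mult_strict_left_mono) auto
    finally show ?thesis by simp
  qed
  define \<phi> where "\<phi> q = f q - \<epsilon> * fst q" for q
  have CD: "?C \<subseteq> ?D" using \<tau> by (auto simp: cone_def)
  have "continuous_on ?D f"
    unfolding continuous_on_eq_continuous_within
    using D has_derivative_continuous by blast
  then have "continuous_on ?C \<phi>" unfolding \<phi>_def
    by (intro continuous_intros continuous_on_subset[OF _ CD])
  then obtain p where p: "p \<in> ?C" and pmax: "\<And>q. q \<in> ?C \<Longrightarrow> \<phi> q \<le> \<phi> p"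
    using continuous_attains_sup[OF cone_compact[OF K]] p0(1) by blast
  have "\<phi> p0 \<le> \<phi> p" using pmax p0 by blast
  moreover have "\<epsilon> * fst p0 \<le> \<epsilon> * \<tau>" using p0 \<epsilon> by (simp add: cone_def)
  ultimately have big: "\<phi> p > A" using \<epsilon>\<tau> unfolding \<phi>_def by linarith
  obtain s y where py: "p = (s, y)" by (cases p)
  have sy: "0 \<le> s" "s \<le> \<tau>" "\<bar>y - x0\<bar> \<le> K * (t0 - s)" using p py by (auto simp: cone_def)
  show False
  proof (cases "s = 0")
    case True
    then have "f p \<le> A" using base sy py by simp
    then show False using big True py unfolding \<phi>_def by simp
  next
    case False
    then have s0: "s > 0" using sy by simp
    define cp where "cp = c p"
    have cpK: "\<bar>cp\<bar> \<le> K" using cb p cp_def by blast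
    define \<gamma> where "\<gamma> \<delta> = (s - \<delta>, y - \<delta> * cp)" for \<delta> :: real
    have g0: "\<gamma> 0 = p" using py \<gamma>_def by simp
    have \<gamma>D: "\<gamma> ` {0..s} \<subseteq> ?D" using sy \<tau> by (auto simp: \<gamma>_def)
    have dg: "(\<gamma> has_derivative (\<lambda>d. (- d, - d * cp))) (at 0 within {0..s})"
      unfolding \<gamma>_def by (auto intro!: derivative_eq_intros)
    have pD: "p \<in> ?D" using p CD by blast
    have df: "(f has_derivative (\<lambda>q. ft p * fst q + fx p * snd q)) (at (\<gamma> 0) within \<gamma> ` {0..s})"
      using has_derivative_subset[OF D[rule_format, OF pD] \<gamma>D] g0 by simp
    have "((f \<circ> \<gamma>) has_derivative ((\<lambda>q. ft p * fst q + fx p * snd q) \<circ> (\<lambda>d. (- d, - d * cp)))) (at 0 within {0..s})"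
      by (rule diff_chain_within[OF dg df])
    moreover have "((\<lambda>q. ft p * fst q + fx p * snd q) \<circ> (\<lambda>d. (- d, - d * cp))) = (*) 0"
    proof -
      have "ft p + cp * fx p = 0" using eq pD unfolding cp_def by blast
      then have ftp: "ft p = - (cp * fx p)" by linarith
      show ?thesis by (auto simp: fun_eq_iff ftp algebra_simps)
    qed
    ultimately have "((f \<circ> \<gamma>) has_real_derivative 0) (at 0 within {0..s})"
      by (metis has_field_derivative_def)
    then have "((\<lambda>\<delta>. f (\<gamma> \<delta>) - \<epsilon> * (s - \<delta>)) has_real_derivative (0 - \<epsilon> * (0 - 1))) (at 0 within {0..s})"
      by (auto intro!: derivative_eq_intros simp: o_def)
    then have dd: "((\<lambda>\<delta>. \<phi> (\<gamma> \<delta>)) has_real_derivative \<epsilon>) (at 0 within {0..s})"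
      by (simp add: \<phi>_def \<gamma>_def)
    from has_real_derivative_pos_inc_right[OF dd \<epsilon>] obtain d where
      d: "d > 0" "\<And>h. h > 0 \<Longrightarrow> 0 + h \<in> {0..s} \<Longrightarrow> h < d \<Longrightarrow> \<phi> (\<gamma> 0) < \<phi> (\<gamma> (0 + h))"
      by blast
    define h where "h = min s (d / 2)"
    have h: "h > 0" "h \<le> s" "h < d" using s0 d by (auto simp: h_def)
    have "\<gamma> h \<in> ?C"
    proof -
      have "\<bar>(y - x0) - h * cp\<bar> \<le> \<bar>y - x0\<bar> + \<bar>h * cp\<bar>" by (rule abs_triangle_ineq4)
      then have "\<bar>y - h * cp - x0\<bar> \<le> \<bar>y - x0\<bar> + h * \<bar>cp\<bar>" using h
        by (simp add: abs_mult algebra_simps)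
      also have "\<dots> \<le> K * (t0 - s) + h * K" using sy cpK h by (intro add_mono mult_left_mono) auto
      finally show ?thesis using sy h by (auto simp: cone_def \<gamma>_def algebra_simps)
    qed
    then have "\<phi> (\<gamma> h) \<le> \<phi> p" using pmax by blast
    moreover have "\<phi> (\<gamma> 0) < \<phi> (\<gamma> (0 + h))" using d(2)[of h] h by auto
    ultimately show False using g0 by simp
  qed
qed

lemma maxp2:
  fixes f ft fx c :: "real \<times> real \<Rightarrow> real"
  assumes D: "\<forall>p\<in>{0..<T} \<times> UNIV. (f has_derivative (\<lambda>q. ft p * fst q + fx p * snd q)) (at p within {0..<T} \<times> UNIV)"
    and eq: "\<forall>p\<in>{0..<T} \<times> UNIV. ft p + c p * fx p = 0"
    and \<tau>: "0 \<le> \<tau>" "\<tau> \<le> t0" "t0 < T" and K: "0 \<le> K"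
    and cb: "\<forall>p\<in>cone K t0 x0 \<tau>. \<bar>c p\<bar> \<le> K"
    and base: "\<forall>y. \<bar>y - x0\<bar> \<le> K * t0 \<longrightarrow> \<bar>f (0, y) - m\<bar> \<le> A"
  shows "\<forall>p\<in>cone K t0 x0 \<tau>. \<bar>f p - m\<bar> \<le> A"
proof -
  have b1: "\<forall>y. \<bar>y - x0\<bar> \<le> K * t0 \<longrightarrow> f (0, y) \<le> m + A" using base by (auto simp: abs_le_iff)
  have b2: "\<forall>y. \<bar>y - x0\<bar> \<le> K * t0 \<longrightarrow> - f (0, y) \<le> - m + A" using base by (auto simp: abs_le_iff)
  have D2: "\<forall>p\<in>{0..<T} \<times> UNIV. ((\<lambda>q. - f q) has_derivative (\<lambda>q. (- ft p) * fst q + (- fx p) * snd q)) (at p within {0..<T} \<times> UNIV)"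
  proof
    fix p assume "p \<in> {0..<T} \<times> (UNIV :: real set)"
    from has_derivative_minus[OF D[rule_format, OF this]]
    show "((\<lambda>q. - f q) has_derivative (\<lambda>q. (- ft p) * fst q + (- fx p) * snd q)) (at p within {0..<T} \<times> UNIV)"
      by simp
  qed
  have eq2: "\<forall>p\<in>{0..<T} \<times> UNIV. - ft p + c p * (- fx p) = 0" using eq by (metis add.inverse_neutral minus_add_distrib mult_minus_right)
  have r1: "\<forall>p\<in>cone K t0 x0 \<tau>. f p \<le> m + A" by (rule maxp[OF D eq \<tau> K cb b1])
  have r2: "\<forall>p\<in>cone K t0 x0 \<tau>. - f p \<le> - m + A" by (rule maxp[OF D2 eq2 \<tau> K cb b2])
  show ?thesis using r1 r2 by (auto simp: abs_le_iff)
qed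

theorem mainTheorem1:
  fixes w0 w0' w0'' :: "real \<Rightarrow> real"
    and w wt wx :: "real \<Rightarrow> real \<Rightarrow> real"
    and T a b :: real
  assumes "\<And>x. (w0 has_real_derivative w0' x) (at x)"
    and "\<And>x. (w0' has_real_derivative w0'' x) (at x)"
    and "continuous_on UNIV w0''"
    and "bounded (range w0')"
    and "(w0' \<longlongrightarrow> a) at_top"
    and "(w0' \<longlongrightarrow> b) at_bot"
    and "classical_solution_P w0 T w wt wx"
  shows "\<forall>t\<in>{0..<T}.
           (wx t \<longlongrightarrow> a) at_top \<and> (wx t \<longlongrightarrow> b) at_bot \<and>
           (wt t \<longlongrightarrow> 0) at_top \<and> (wt t \<longlongrightarrow> 0) at_bot"
proof
  fix t0 assume t0: "t0 \<in> {0..<T}"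
  let ?D = "{0..<T} \<times> (UNIV :: real set)"
  have d1: "\<forall>t\<in>{0..<T}. \<forall>x. ((\<lambda>s. w s x) has_real_derivative wt t x) (at t within {0..<T}) \<and>
        ((\<lambda>y. w t y) has_real_derivative wx t x) (at x)"
    and init: "\<forall>x. w 0 x = w0 x" "\<forall>x. wt 0 x = 0"
    using assms(7) unfolding classical_solution_P_def by blast+
  obtain wtt wtx wxt wxx where H:
    "\<forall>t\<in>{0..<T}. \<forall>x.
           ((\<lambda>s. wt s x) has_real_derivative wtt t x) (at t within {0..<T}) \<and>
           ((\<lambda>y. wt t y) has_real_derivative wtx t x) (at x) \<and>
           ((\<lambda>s. wx s x) has_real_derivative wxt t x) (at t within {0..<T}) \<and>
           ((\<lambda>y. wx t y) has_real_derivative wxx t x) (at x) \<and>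
           wtt t x - (Q (wx t x))\<^sup>2 * wxx t x = 0"
    and cwt: "continuous_on ?D (\<lambda>(t, x). wt t x)"
    and cwx: "continuous_on ?D (\<lambda>(t, x). wx t x)"
    and cwtx: "continuous_on ?D (\<lambda>(t, x). wtx t x)"
    and cwxt: "continuous_on ?D (\<lambda>(t, x). wxt t x)"
    and cwxx: "continuous_on ?D (\<lambda>(t, x). wxx t x)"
    using assms(7) unfolding classical_solution_P_def by blast
  have Sch: "wtx t x = wxt t x" if "t \<in> {0..<T}" for t x
    by (rule schwarz[OF d1 _ cwtx cwxt that]) (use H in blast)
  have T0: "0 \<in> {0..<T}" using t0 by auto
  have wx0: "wx 0 y = w0' y" for y
  proof -
    have "(\<lambda>y. w 0 y) = w0" using init by auto
    then have "(w0 has_real_derivative wx 0 y) (at y)" using d1 T0 by metis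
    then show ?thesis using assms(1) DERIV_unique by blast
  qed
  define r where "r s y = wt s y - L (wx s y)" for s y
  define lf where "lf s y = wt s y + L (wx s y)" for s y
  define rt where "rt s y = wtt s y - Q (wx s y) * wxt s y" for s y
  define rx where "rx s y = wtx s y - Q (wx s y) * wxx s y" for s y
  define lt where "lt s y = wtt s y + Q (wx s y) * wxt s y" for s y
  define lx where "lx s y = wtx s y + Q (wx s y) * wxx s y" for s y
  have rd: "\<forall>s\<in>{0..<T}. \<forall>y. ((\<lambda>s. r s y) has_real_derivative rt s y) (at s within {0..<T}) \<and>
      ((\<lambda>y. r s y) has_real_derivative rx s y) (at y)"
  proof (intro ballI allI conjI)
    fix s y assume s: "s \<in> {0..<T}"
    show "((\<lambda>s. r s y) has_real_derivative rt s y) (at s within {0..<T})"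
    proof -
      have h1: "((\<lambda>s. wt s y) has_real_derivative wtt s y) (at s within {0..<T})"
        and h2: "((\<lambda>s. wx s y) has_real_derivative wxt s y) (at s within {0..<T})" using H s by blast+
      have h3: "((\<lambda>s. L (wx s y)) has_real_derivative Q (wx s y) * wxt s y) (at s within {0..<T})"
        by (rule DERIV_chain2[OF L_deriv h2])
      show ?thesis unfolding r_def rt_def using DERIV_diff[OF h1 h3] by simp
    qed
    show "((\<lambda>y. r s y) has_real_derivative rx s y) (at y)"
    proof -
      have h1: "((\<lambda>y. wt s y) has_real_derivative wtx s y) (at y)"
        and h2: "((\<lambda>y. wx s y) has_real_derivative wxx s y) (at y)" using H s by blast+
      have h3: "((\<lambda>y. L (wx s y)) has_real_derivative Q (wx s y) * wxx s y) (at y)"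
        by (rule DERIV_chain2[OF L_deriv h2])
      show ?thesis unfolding r_def rx_def using DERIV_diff[OF h1 h3] by simp
    qed
  qed
  have ld: "\<forall>s\<in>{0..<T}. \<forall>y. ((\<lambda>s. lf s y) has_real_derivative lt s y) (at s within {0..<T}) \<and>
      ((\<lambda>y. lf s y) has_real_derivative lx s y) (at y)"
  proof (intro ballI allI conjI)
    fix s y assume s: "s \<in> {0..<T}"
    show "((\<lambda>s. lf s y) has_real_derivative lt s y) (at s within {0..<T})"
    proof -
      have h1: "((\<lambda>s. wt s y) has_real_derivative wtt s y) (at s within {0..<T})"
        and h2: "((\<lambda>s. wx s y) has_real_derivative wxt s y) (at s within {0..<T})" using H s by blast+
      have h3: "((\<lambda>s. L (wx s y)) has_real_derivative Q (wx s y) * wxt s y) (at s within {0..<T})"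
        by (rule DERIV_chain2[OF L_deriv h2])
      show ?thesis unfolding lf_def lt_def using DERIV_add[OF h1 h3] by simp
    qed
    show "((\<lambda>y. lf s y) has_real_derivative lx s y) (at y)"
    proof -
      have h1: "((\<lambda>y. wt s y) has_real_derivative wtx s y) (at y)"
        and h2: "((\<lambda>y. wx s y) has_real_derivative wxx s y) (at y)" using H s by blast+
      have h3: "((\<lambda>y. L (wx s y)) has_real_derivative Q (wx s y) * wxx s y) (at y)"
        by (rule DERIV_chain2[OF L_deriv h2])
      show ?thesis unfolding lf_def lx_def using DERIV_add[OF h1 h3] by simp
    qed
  qed
  have cWX: "continuous_on ?D (\<lambda>q. wx (fst q) (snd q))" using cwx by (simp add: case_prod_beta')
  have cWTX: "continuous_on ?D (\<lambda>q. wtx (fst q) (snd q))" using cwtx by (simp add: case_prod_beta')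
  have cWXX: "continuous_on ?D (\<lambda>q. wxx (fst q) (snd q))" using cwxx by (simp add: case_prod_beta')
  have crx: "continuous_on ?D (\<lambda>(s, y). rx s y)"
    unfolding rx_def Q_def case_prod_beta' by (intro continuous_intros cWX cWTX cWXX)
  have clx: "continuous_on ?D (\<lambda>(s, y). lx s y)"
    unfolding lx_def Q_def case_prod_beta' by (intro continuous_intros cWX cWTX cWXX)
  define R where "R q = r (fst q) (snd q)" for q
  define LF where "LF q = lf (fst q) (snd q)" for q
  define c where "c q = Q (wx (fst q) (snd q))" for q
  have RD: "\<forall>p\<in>?D. (R has_derivative (\<lambda>q. rt (fst p) (snd p) * fst q + rx (fst p) (snd p) * snd q)) (at p within ?D)"
    unfolding R_def[abs_def] using joint_deriv[OF rd crx] by blast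
  have LD: "\<forall>p\<in>?D. (LF has_derivative (\<lambda>q. lt (fst p) (snd p) * fst q + lx (fst p) (snd p) * snd q)) (at p within ?D)"
    unfolding LF_def[abs_def] using joint_deriv[OF ld clx] by blast
  have Req: "\<forall>p\<in>?D. rt (fst p) (snd p) + c p * rx (fst p) (snd p) = 0"
  proof
    fix p assume p: "p \<in> ?D"
    then have "fst p \<in> {0..<T}" by auto
    then show "rt (fst p) (snd p) + c p * rx (fst p) (snd p) = 0"
      using H Sch unfolding rt_def rx_def c_def
      by (auto simp: algebra_simps power2_eq_square)
  qed
  have Leq: "\<forall>p\<in>?D. lt (fst p) (snd p) + (- c p) * lx (fst p) (snd p) = 0"
  proof
    fix p assume p: "p \<in> ?D"
    then have "fst p \<in> {0..<T}" by auto
    then show "lt (fst p) (snd p) + (- c p) * lx (fst p) (snd p) = 0"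
      using H Sch unfolding lt_def lx_def c_def
      by (auto simp: algebra_simps power2_eq_square)
  qed
  have cD: "\<forall>p\<in>?D. - c p = - c p" by simp
  obtain B where B: "\<And>x. \<bar>w0' x\<bar> \<le> B"
    using assms(4) unfolding bounded_iff by auto
  have Lmono: "L u \<le> L v" if "u \<le> v" for u v
    using L_lip_aux[of u v] that by (cases "u = v") auto
  define M where "M = max \<bar>L B\<bar> \<bar>L (- B)\<bar>"
  have M: "\<bar>L (w0' x)\<bar> \<le> M" for x
  proof -
    have "- B \<le> w0' x" "w0' x \<le> B" using B[of x] by auto
    then have "L (- B) \<le> L (w0' x)" "L (w0' x) \<le> L B" using Lmono by auto
    then show ?thesis unfolding M_def by (auto simp: abs_le_iff)
  qed
  have M0: "0 \<le> M" unfolding M_def by simp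
  define K where "K = M + 2"
  have K0: "0 \<le> K" using M0 K_def by simp
  have R0: "R (0, y) = - L (w0' y)" for y unfolding R_def r_def using init wx0 by simp
  have LF0: "LF (0, y) = L (w0' y)" for y unfolding LF_def lf_def using init wx0 by simp
  have cK: "\<bar>c p\<bar> \<le> K" if "\<bar>R p\<bar> < M + 1" "\<bar>LF p\<bar> < M + 1" for p
  proof -
    have "L (wx (fst p) (snd p)) = (LF p - R p) / 2" unfolding LF_def R_def lf_def r_def by simp
    then have "\<bar>L (wx (fst p) (snd p))\<bar> < M + 1" using that by (auto simp: abs_less_iff)
    then have "\<bar>wx (fst p) (snd p)\<bar> < M + 1" using abs_le_L by (meson le_less_trans)
    moreover have "c p \<le> 1 + \<bar>wx (fst p) (snd p)\<bar>" unfolding c_def by (rule Q_le)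
    moreover have "c p \<ge> 1" unfolding c_def by (rule Q_ge1)
    ultimately show ?thesis unfolding K_def by auto
  qed
  have cRD: "continuous_on ?D R"
    unfolding continuous_on_eq_continuous_within using RD has_derivative_continuous by blast
  have cLD: "continuous_on ?D LF"
    unfolding continuous_on_eq_continuous_within using LD has_derivative_continuous by blast
  have t0': "0 \<le> t0" "t0 < T" using t0 by auto
  have boot: "\<forall>p\<in>cone K t0 x0 t0. \<bar>R p\<bar> < M + 1 \<and> \<bar>LF p\<bar> < M + 1" for x0
  proof (rule ccontr)
    let ?C = "cone K t0 x0 t0"
    define Bad where "Bad = {p\<in>?C. M + 1 \<le> \<bar>R p\<bar>} \<union> {p\<in>?C. M + 1 \<le> \<bar>LF p\<bar>}"
    assume "\<not> (\<forall>p\<in>?C. \<bar>R p\<bar> < M + 1 \<and> \<bar>LF p\<bar> < M + 1)"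
    then have ne: "Bad \<noteq> {}" unfolding Bad_def by force
    have CD: "?C \<subseteq> ?D" using t0' by (auto simp: cone_def)
    have "closed Bad" unfolding Bad_def
      by (intro closed_Un continuous_on_closed_Collect_le cone_closed continuous_intros
          continuous_on_subset[OF cRD CD] continuous_on_subset[OF cLD CD])
    moreover have "Bad \<subseteq> ?C" unfolding Bad_def by blast
    ultimately have "compact Bad"
      by (metis compact_Int_closed cone_compact[OF K0] inf.absorb_iff2)
    then obtain pb where pb: "pb \<in> Bad" and pmin: "\<And>q. q \<in> Bad \<Longrightarrow> fst pb \<le> fst q"
      using continuous_attains_inf[OF _ ne, of fst] continuous_on_fst continuous_on_id by blast
    obtain \<tau> yb where pbe: "pb = (\<tau>, yb)" by (cases pb)
    have pbC: "pb \<in> ?C" using pb unfolding Bad_def by blast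
    then have tb: "0 \<le> \<tau>" "\<tau> \<le> t0" "\<bar>yb - x0\<bar> \<le> K * (t0 - \<tau>)" using pbe by (auto simp: cone_def)
    have "\<tau> \<noteq> 0"
    proof
      assume "\<tau> = 0"
      then have "\<bar>R pb\<bar> \<le> M" "\<bar>LF pb\<bar> \<le> M" using pbe R0 LF0 M by auto
      then show False using pb unfolding Bad_def by auto
    qed
    then have tpos: "\<tau> > 0" using tb by simp
    have small: "\<bar>R q\<bar> \<le> M \<and> \<bar>LF q\<bar> \<le> M" if "0 \<le> \<tau>'" "\<tau>' < \<tau>" "q \<in> cone K t0 x0 \<tau>'" for \<tau>' q
    proof -
      have sub: "cone K t0 x0 \<tau>' \<subseteq> ?C" using that tb by (auto simp: cone_def)
      have good: "\<bar>R p\<bar> < M + 1 \<and> \<bar>LF p\<bar> < M + 1" if "p \<in> cone K t0 x0 \<tau>'" for p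
      proof (rule ccontr)
        assume "\<not> (\<bar>R p\<bar> < M + 1 \<and> \<bar>LF p\<bar> < M + 1)"
        then have "p \<in> Bad" using sub that unfolding Bad_def by auto
        then have "fst pb \<le> fst p" by (rule pmin)
        then have "\<tau> \<le> fst p" using pbe by simp
        moreover have "fst p \<le> \<tau>'" using that by (simp add: cone_def)
        ultimately show False using \<open>\<tau>' < \<tau>\<close> by simp
      qed
      have cb: "\<forall>p\<in>cone K t0 x0 \<tau>'. \<bar>c p\<bar> \<le> K" using good cK by blast
      have cb2: "\<forall>p\<in>cone K t0 x0 \<tau>'. \<bar>- c p\<bar> \<le> K" using cb by simp
      have tt: "\<tau>' \<le> t0" using that tb by simp
      have "\<forall>p\<in>cone K t0 x0 \<tau>'. \<bar>R p - 0\<bar> \<le> M"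
        by (rule maxp2[OF RD Req \<open>0 \<le> \<tau>'\<close> tt t0'(2) K0 cb]) (use R0 M in simp)
      moreover have "\<forall>p\<in>cone K t0 x0 \<tau>'. \<bar>LF p - 0\<bar> \<le> M"
        by (rule maxp2[OF LD Leq \<open>0 \<le> \<tau>'\<close> tt t0'(2) K0 cb2]) (use LF0 M in simp)
      ultimately show ?thesis using that(3) by simp
    qed
    have pbD: "pb \<in> ?D" using pbC CD by blast
    obtain d1 where d1: "d1 > 0" "\<And>q. q \<in> ?D \<Longrightarrow> dist q pb < d1 \<Longrightarrow> dist (R q) (R pb) < 1"
      using cRD pbD unfolding continuous_on_iff by (meson zero_less_one)
    obtain d2 where d2: "d2 > 0" "\<And>q. q \<in> ?D \<Longrightarrow> dist q pb < d2 \<Longrightarrow> dist (LF q) (LF pb) < 1"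
      using cLD pbD unfolding continuous_on_iff by (meson zero_less_one)
    define \<tau>' where "\<tau>' = max 0 (\<tau> - min d1 d2 / 2)"
    have t': "0 \<le> \<tau>'" "\<tau>' < \<tau>" "\<tau> - \<tau>' < min d1 d2" using tpos d1 d2 unfolding \<tau>'_def by auto
    have qC: "(\<tau>', yb) \<in> cone K t0 x0 \<tau>'"
    proof -
      have "K * (t0 - \<tau>) \<le> K * (t0 - \<tau>')" using K0 t' by (intro mult_left_mono) auto
      then show ?thesis using tb t' by (auto simp: cone_def)
    qed
    have qD: "(\<tau>', yb) \<in> ?D" using t' tb t0' by auto
    have dq: "dist (\<tau>', yb) pb < min d1 d2" using t' pbe by (simp add: dist_Pair_Pair dist_real_def)
    have "\<bar>R (\<tau>', yb)\<bar> \<le> M" "\<bar>LF (\<tau>', yb)\<bar> \<le> M" using small[OF t'(1,2) qC] by auto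
    moreover have "dist (R (\<tau>', yb)) (R pb) < 1" "dist (LF (\<tau>', yb)) (LF pb) < 1"
      using d1(2)[OF qD] d2(2)[OF qD] dq by auto
    ultimately have "\<bar>R pb\<bar> < M + 1" "\<bar>LF pb\<bar> < M + 1"
      by (auto simp: dist_real_def abs_less_iff abs_le_iff)
    then show False using pb unfolding Bad_def by auto
  qed
  have keyR: "\<bar>R (t0, x0) - m\<bar> \<le> A" if "\<forall>y. \<bar>y - x0\<bar> \<le> K * t0 \<longrightarrow> \<bar>R (0, y) - m\<bar> \<le> A" for x0 m A
  proof -
    have cb: "\<forall>p\<in>cone K t0 x0 t0. \<bar>c p\<bar> \<le> K" using boot cK by blast
    have "(t0, x0) \<in> cone K t0 x0 t0" using t0' by (simp add: cone_def)
    then show ?thesis using maxp2[OF RD Req t0'(1) order_refl t0'(2) K0 cb that] by blast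
  qed
  have keyL: "\<bar>LF (t0, x0) - m\<bar> \<le> A" if "\<forall>y. \<bar>y - x0\<bar> \<le> K * t0 \<longrightarrow> \<bar>LF (0, y) - m\<bar> \<le> A" for x0 m A
  proof -
    have cb: "\<forall>p\<in>cone K t0 x0 t0. \<bar>- c p\<bar> \<le> K" using boot cK by simp
    have "(t0, x0) \<in> cone K t0 x0 t0" using t0' by (simp add: cone_def)
    then show ?thesis using maxp2[OF LD Leq t0'(1) order_refl t0'(2) K0 cb that] by blast
  qed
  have "((\<lambda>x. R (t0, x)) \<longlongrightarrow> - L a) at_top"
    unfolding tendsto_iff
  proof (intro allI impI)
    fix e :: real assume e: "e > 0"
    have lim0: "((\<lambda>x. L (w0' x)) \<longlongrightarrow> L a) at_top" by (rule isCont_tendsto_compose[OF isCont_L assms(5)])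
    have "\<forall>\<^sub>F y in at_top. dist (L (w0' y)) (L a) < e / 2" using tendsto_iff[THEN iffD1, OF lim0, rule_format, of "e / 2"] e by simp
    then obtain N where N: "\<And>y. y \<ge> N \<Longrightarrow> dist (L (w0' y)) (L a) < e / 2"
      unfolding eventually_at_top_linorder by blast
    show "\<forall>\<^sub>F x in at_top. dist (R (t0, x)) (- L a) < e"
      unfolding eventually_at_top_linorder
    proof (intro exI allI impI)
      fix x0 assume x0: "x0 \<ge> N + K * t0"
      have "\<bar>R (t0, x0) - (- L a)\<bar> \<le> e / 2"
      proof (rule keyR, intro allI impI)
        fix y assume "\<bar>y - x0\<bar> \<le> K * t0"
        then have "y \<ge> N" using x0 by (auto simp: abs_le_iff)
        then show "\<bar>R (0, y) - (- L a)\<bar> \<le> e / 2" using N[of y] R0[of y]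
          by (simp add: dist_real_def abs_minus_commute)
      qed
      then show "dist (R (t0, x0)) (- L a) < e" using e by (simp add: dist_real_def)
    qed
  qed
  note Rtop = this
  have "((\<lambda>x. LF (t0, x)) \<longlongrightarrow> L a) at_top"
    unfolding tendsto_iff
  proof (intro allI impI)
    fix e :: real assume e: "e > 0"
    have lim0: "((\<lambda>x. L (w0' x)) \<longlongrightarrow> L a) at_top" by (rule isCont_tendsto_compose[OF isCont_L assms(5)])
    have "\<forall>\<^sub>F y in at_top. dist (L (w0' y)) (L a) < e / 2" using tendsto_iff[THEN iffD1, OF lim0, rule_format, of "e / 2"] e by simp
    then obtain N where N: "\<And>y. y \<ge> N \<Longrightarrow> dist (L (w0' y)) (L a) < e / 2"
      unfolding eventually_at_top_linorder by blast
    show "\<forall>\<^sub>F x in at_top. dist (LF (t0, x)) (L a) < e"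
      unfolding eventually_at_top_linorder
    proof (intro exI allI impI)
      fix x0 assume x0: "x0 \<ge> N + K * t0"
      have "\<bar>LF (t0, x0) - (L a)\<bar> \<le> e / 2"
      proof (rule keyL, intro allI impI)
        fix y assume "\<bar>y - x0\<bar> \<le> K * t0"
        then have "y \<ge> N" using x0 by (auto simp: abs_le_iff)
        then show "\<bar>LF (0, y) - (L a)\<bar> \<le> e / 2" using N[of y] LF0[of y]
          by (simp add: dist_real_def abs_minus_commute)
      qed
      then show "dist (LF (t0, x0)) (L a) < e" using e by (simp add: dist_real_def)
    qed
  qed
  note Ltop = this
  have "((\<lambda>x. R (t0, x)) \<longlongrightarrow> - L b) at_bot"
    unfolding tendsto_iff
  proof (intro allI impI)
    fix e :: real assume e: "e > 0"
    have lim0: "((\<lambda>x. L (w0' x)) \<longlongrightarrow> L b) at_bot" by (rule isCont_tendsto_compose[OF isCont_L assms(6)])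
    have "\<forall>\<^sub>F y in at_bot. dist (L (w0' y)) (L b) < e / 2" using tendsto_iff[THEN iffD1, OF lim0, rule_format, of "e / 2"] e by simp
    then obtain N where N: "\<And>y. y \<le> N \<Longrightarrow> dist (L (w0' y)) (L b) < e / 2"
      unfolding eventually_at_bot_linorder by blast
    show "\<forall>\<^sub>F x in at_bot. dist (R (t0, x)) (- L b) < e"
      unfolding eventually_at_bot_linorder
    proof (intro exI allI impI)
      fix x0 assume x0: "x0 \<le> N - K * t0"
      have "\<bar>R (t0, x0) - (- L b)\<bar> \<le> e / 2"
      proof (rule keyR, intro allI impI)
        fix y assume "\<bar>y - x0\<bar> \<le> K * t0"
        then have "y \<le> N" using x0 by (auto simp: abs_le_iff)
        then show "\<bar>R (0, y) - (- L b)\<bar> \<le> e / 2" using N[of y] R0[of y]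
          by (simp add: dist_real_def abs_minus_commute)
      qed
      then show "dist (R (t0, x0)) (- L b) < e" using e by (simp add: dist_real_def)
    qed
  qed
  note Rbot = this
  have "((\<lambda>x. LF (t0, x)) \<longlongrightarrow> L b) at_bot"
    unfolding tendsto_iff
  proof (intro allI impI)
    fix e :: real assume e: "e > 0"
    have lim0: "((\<lambda>x. L (w0' x)) \<longlongrightarrow> L b) at_bot" by (rule isCont_tendsto_compose[OF isCont_L assms(6)])
    have "\<forall>\<^sub>F y in at_bot. dist (L (w0' y)) (L b) < e / 2" using tendsto_iff[THEN iffD1, OF lim0, rule_format, of "e / 2"] e by simp
    then obtain N where N: "\<And>y. y \<le> N \<Longrightarrow> dist (L (w0' y)) (L b) < e / 2"
      unfolding eventually_at_bot_linorder by blast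
    show "\<forall>\<^sub>F x in at_bot. dist (LF (t0, x)) (L b) < e"
      unfolding eventually_at_bot_linorder
    proof (intro exI allI impI)
      fix x0 assume x0: "x0 \<le> N - K * t0"
      have "\<bar>LF (t0, x0) - (L b)\<bar> \<le> e / 2"
      proof (rule keyL, intro allI impI)
        fix y assume "\<bar>y - x0\<bar> \<le> K * t0"
        then have "y \<le> N" using x0 by (auto simp: abs_le_iff)
        then show "\<bar>LF (0, y) - (L b)\<bar> \<le> e / 2" using N[of y] LF0[of y]
          by (simp add: dist_real_def abs_minus_commute)
      qed
      then show "dist (LF (t0, x0)) (L b) < e" using e by (simp add: dist_real_def)
    qed
  qed
  note Lbot = this
  have wte: "wt t0 = (\<lambda>x. (R (t0, x) + LF (t0, x)) / 2)"
    by (simp add: fun_eq_iff R_def LF_def r_def lf_def)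
  have wxe: "(\<lambda>x. L (wx t0 x)) = (\<lambda>x. (LF (t0, x) - R (t0, x)) / 2)"
    by (simp add: fun_eq_iff R_def LF_def r_def lf_def)
  have "((\<lambda>x. (R (t0, x) + LF (t0, x)) / 2) \<longlongrightarrow> (- L a + L a) / 2) at_top"
    by (intro tendsto_divide tendsto_add tendsto_diff Rtop Ltop tendsto_const) simp
  then have T1: "(wt t0 \<longlongrightarrow> 0) at_top" unfolding wte by simp
  have "((\<lambda>x. (R (t0, x) + LF (t0, x)) / 2) \<longlongrightarrow> (- L b + L b) / 2) at_bot"
    by (intro tendsto_divide tendsto_add tendsto_diff Rbot Lbot tendsto_const) simp
  then have T2: "(wt t0 \<longlongrightarrow> 0) at_bot" unfolding wte by simp
  have "((\<lambda>x. (LF (t0, x) - R (t0, x)) / 2) \<longlongrightarrow> (L a - - L a) / 2) at_top"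
    by (intro tendsto_divide tendsto_add tendsto_diff Rtop Ltop tendsto_const) simp
  then have "((\<lambda>x. L (wx t0 x)) \<longlongrightarrow> L a) at_top" unfolding wxe by simp
  then have T3: "(wx t0 \<longlongrightarrow> a) at_top" by (rule L_tendsto_inv)
  have "((\<lambda>x. (LF (t0, x) - R (t0, x)) / 2) \<longlongrightarrow> (L b - - L b) / 2) at_bot"
    by (intro tendsto_divide tendsto_add tendsto_diff Rbot Lbot tendsto_const) simp
  then have "((\<lambda>x. L (wx t0 x)) \<longlongrightarrow> L b) at_bot" unfolding wxe by simp
  then have T4: "(wx t0 \<longlongrightarrow> b) at_bot" by (rule L_tendsto_inv)
  show "(wx t0 \<longlongrightarrow> a) at_top \<and> (wx t0 \<longlongrightarrow> b) at_bot \<and>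
           (wt t0 \<longlongrightarrow> 0) at_top \<and> (wt t0 \<longlongrightarrow> 0) at_bot" using T1 T2 T3 T4 by blast
qed

end
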